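(* Let $\mathbb{K}$ be a field of characteristic $0$ and let $L=\sum_{i=0}^{J}a_i(n)\sigma^i$ be a nonzero operator with $a_i(n)\in\mathbb{K}[n]$. Then the continued zero index satisfies $C_L\le J$.
   Context: $\sigma$ is the shift operator. The adjoint of $L$ acts on polynomials by $L^*(x(n))=\sum_{i=0}^J a_i(n-i)x(n-i)$. Continued zero index $C_L$: if $L^*(1)\neq0$ then $C_L=0$; if $L^*(1)=0$ then $C_L$ is the positive integer with $L^*(n^{C_L})\neq 0$ and $L^*(n^i)=0$ for $0\le i\le C_L-1$. *)

theory Defs
  imports "HOL-Computational_Algebra.Polynomial"
begin

text \<open>The operator L = sum_{i=0}^J a_i(n) sigma^i is given by its coefficient
  family a :: nat => 'a poly (only a 0, ..., a J matter) and the order bound J.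
  The shift n |-> n - i on polynomials is composition with [:-i, 1:].\<close>

definition adjoint :: "(nat \<Rightarrow> 'a::comm_ring_1 poly) \<Rightarrow> nat \<Rightarrow> 'a poly \<Rightarrow> 'a poly" where
  "adjoint a J x =
     (\<Sum>i=0..J. pcompose (a i) [:- of_nat i, 1:] * pcompose x [:- of_nat i, 1:])"

definition continued_zero_index :: "(nat \<Rightarrow> 'a::comm_ring_1 poly) \<Rightarrow> nat \<Rightarrow> nat" where
  "continued_zero_index a J =
     (if adjoint a J 1 \<noteq> 0 then 0
      else (LEAST c. 0 < c \<and> adjoint a J (monom 1 c) \<noteq> 0 \<and>
                     (\<forall>i<c. adjoint a J (monom 1 i) = 0)))"

end

theory Submission
  imports Defs
begin

lemma adj_add: "adjoint a J (x + y) = adjoint a J x + adjoint a J y"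
  by (simp add: adjoint_def pcompose_add algebra_simps sum.distrib)

lemma adj_smult: "adjoint a J (smult c x) = smult c (adjoint a J x)"
  proof -
  have "smult c (\<Sum>i=0..J. f i) = (\<Sum>i=0..J. smult c (f i))" for f :: "nat \<Rightarrow> 'a poly"
    by (induction J) (auto simp: smult_add_right)
  then show ?thesis by (simp add: adjoint_def pcompose_smult)
qed

lemma adj_sum: "adjoint a J (\<Sum>i\<in>S. f i) = (\<Sum>i\<in>S. adjoint a J (f i))"
proof (induction S rule: infinite_finite_induct)
  case (infinite A) then show ?case by (simp add: adjoint_def)
next
  case empty then show ?case by (simp add: adjoint_def)
next
  case (insert x F) then show ?case by (simp add: adj_add)
qed

lemma adj_poly:
  "poly (adjoint a J p) t = (\<Sum>i=0..J. poly (a i) (t - of_nat i) * poly p (t - of_nat i))"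
  by (simp add: adjoint_def poly_sum poly_pcompose)

lemma adj_zero_low:
  fixes a :: "nat \<Rightarrow> 'a::field_char_0 poly"
  assumes "\<forall>c\<le>J. adjoint a J (monom 1 c) = 0" and "degree p \<le> J"
  shows "adjoint a J p = 0"
proof -
  have "p = (\<Sum>i\<le>degree p. smult (coeff p i) (monom 1 i))"
    using poly_as_sum_of_monoms[of p] by (simp add: smult_monom)
  then have "adjoint a J p = (\<Sum>i\<le>degree p. smult (coeff p i) (adjoint a J (monom 1 i)))"
    by (metis (no_types, lifting) adj_smult adj_sum sum.cong)
  also have "\<dots> = 0" using assms by (intro sum.neutral) auto
  finally show ?thesis .
qed

lemma all_zero:
  fixes a :: "nat \<Rightarrow> 'a::field_char_0 poly"
  assumes "\<forall>c\<le>J. adjoint a J (monom 1 c) = 0" and "k \<le> J"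
  shows "a k = 0"
proof -
  have "poly (a k) s = 0" for s
  proof -
    define t where "t = s + of_nat k"
    define p where "p = (\<Prod>j\<in>{0..J}-{k}. [:-(t - of_nat j), 1:])"
    have "degree p \<le> (\<Sum>j\<in>{0..J}-{k}. degree [:-(t - of_nat j), (1::'a):])"
      unfolding p_def using degree_prod_sum_le[of "{0..J}-{k}" "\<lambda>j. [:-(t - of_nat j), (1::'a):]"] by (simp add: o_def)
    also have "\<dots> \<le> J" using \<open>k \<le> J\<close> by simp
    finally have dp: "degree p \<le> J" .
    have pp: "poly p x = (\<Prod>j\<in>{0..J}-{k}. x - (t - of_nat j))" for x
      by (simp add: p_def poly_prod algebra_simps)
    have z: "poly p (t - of_nat i) = 0" if "i \<le> J" "i \<noteq> k" for i
      unfolding pp using that by (intro prod_zero) auto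
    have nz: "poly p (t - of_nat k) \<noteq> 0"
      unfolding pp by (subst prod_zero_iff) auto
    have "0 = poly (adjoint a J p) t" using adj_zero_low[OF assms(1) dp] by simp
    also have "\<dots> = (\<Sum>i=0..J. poly (a i) (t - of_nat i) * poly p (t - of_nat i))"
      by (rule adj_poly)
    also have "\<dots> = poly (a k) (t - of_nat k) * poly p (t - of_nat k)"
    proof -
      have "(\<Sum>i=0..J. poly (a i) (t - of_nat i) * poly p (t - of_nat i)) =
         poly (a k) (t - of_nat k) * poly p (t - of_nat k) +
         (\<Sum>i\<in>{0..J}-{k}. poly (a i) (t - of_nat i) * poly p (t - of_nat i))"
        using \<open>k \<le> J\<close> by (intro sum.remove) auto
      also have "(\<Sum>i\<in>{0..J}-{k}. poly (a i) (t - of_nat i) * poly p (t - of_nat i)) = 0"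
        using z by (intro sum.neutral) auto
      finally show ?thesis by simp
    qed
    finally show ?thesis using nz by (simp add: t_def)
  qed
  then show ?thesis by (metis poly_all_0_iff_0)
qed

theorem lemma2p4:
  fixes a :: "nat \<Rightarrow> 'a::field_char_0 poly" and J :: nat
  assumes "\<exists>i\<le>J. a i \<noteq> 0"
  shows "(adjoint a J 1 \<noteq> 0 \<or>
          (\<exists>c. 0 < c \<and> adjoint a J (monom 1 c) \<noteq> 0 \<and>
               (\<forall>i<c. adjoint a J (monom 1 i) = 0)))
         \<and> continued_zero_index a J \<le> J"
proof -
  have "\<exists>c\<le>J. adjoint a J (monom 1 c) \<noteq> 0"
    using assms all_zero by blast
  then obtain c1 where c1: "c1 \<le> J" "adjoint a J (monom 1 c1) \<noteq> 0" by blast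
  define c0 where "c0 = (LEAST c. adjoint a J (monom 1 c) \<noteq> 0)"
  have c0: "adjoint a J (monom 1 c0) \<noteq> 0" unfolding c0_def by (rule LeastI) (rule c1(2))
  have c0J: "c0 \<le> J" unfolding c0_def using c1 by (meson Least_le order_trans)
  have low: "\<forall>i<c0. adjoint a J (monom 1 i) = 0" unfolding c0_def using not_less_Least by blast
  show ?thesis
  proof (cases "c0 = 0")
    case True
    then have "adjoint a J 1 \<noteq> 0" using c0 by (simp add: one_pCons monom_0)
    then show ?thesis by (simp add: continued_zero_index_def)
  next
    case False
    then have "adjoint a J 1 = 0" using low by (metis monom_0 one_pCons gr0I)
    moreover have P: "0 < c0 \<and> adjoint a J (monom 1 c0) \<noteq> 0 \<and> (\<forall>i<c0. adjoint a J (monom 1 i) = 0)"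
      using False c0 low by simp
    moreover have "(LEAST c. 0 < c \<and> adjoint a J (monom 1 c) \<noteq> 0 \<and>
                     (\<forall>i<c. adjoint a J (monom 1 i) = 0)) \<le> c0"
      by (rule Least_le) (rule P)
    ultimately show ?thesis using c0J by (auto simp: continued_zero_index_def)
  qed
qed

end
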